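(* Let $M$ be a monoidal category, $C$ an $M$-actegory and $x\in C$. Then in the bicategory $\mathit{Tamb}$ there are 2-cells $\varepsilon_x:R_x\otimes L_x\Rightarrow C(-,=)$ (in $\mathit{Tamb}_{C,C}$), given by composition $\int^{n}C(c,n\odot x)\times C(n\odot x,c')\to C(c,c')$, and $\eta_x:M(-,=)\Rightarrow L_x\otimes R_x$ (in $\mathit{Tamb}_{M,M}$), given by $M(k,k')\ni h\mapsto h\odot x\in C(k\odot x,k'\odot x)\cong\int^{c\in C}C(k\odot x,c)\times C(c,k'\odot x)$, which are morphisms of Tambara modules and satisfy the triangle identities: the composites $R_x\cong R_x\otimes M(-,=)\xrightarrow{R_x\otimes\eta_x}R_x\otimes L_x\otimes R_x\xrightarrow{\varepsilon_x\otimes R_x}C(-,=)\otimes R_x\cong R_x$ and $L_x\cong M(-,=)\otimes L_x\xrightarrow{\eta_x\otimes L_x}L_x\otimes R_x\otimes L_x\xrightarrow{L_x\otimes\varepsilon_x}L_x\otimes C(-,=)\cong L_x$ are identities (bicategorical associators and unitors being inserted as needed). Thus $R_x$ and $L_x$ are adjoint in $\mathit{Tamb}$. Moreover these structure maps are dinatural in $x$: for every $f:x\to y$ in $C$, $(R_f\otimes L_y);\varepsilon_y=(R_x\otimes L_f);\varepsilon_x$ as 2-cells $R_x\otimes L_y\Rightarrow C(-,=)$, and $\eta_x;(L_x\otimes R_f)=\eta_y;(L_f\otimes R_y)$ as 2-cells $M(-,=)\Rightarrow L_x\otimes R_y$.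
   Context: $(M,\otimes,I,\lambda,a)$ is a monoidal category. An $M$-actegory is a category $C$ with a functor $\odot:M\times C\to C$ and coherent natural isomorphisms $\lambda_x:I\odot x\to x$, $a_{m,n,x}:(m\otimes n)\odot x\to m\odot(n\odot x)$; $M$ is an $M$-actegory via $\otimes$. Composition is diagrammatic: $f;g$ means $f$ then $g$. A Tambara module $P\in\mathit{Tamb}_{C,D}$ ($C,D$ $M$-actegories) is a functor $P:C^{op}\times D\to\mathrm{Set}$ with strength maps $P(c,d)\to P(m\odot c,m\odot d)$ natural in $c,d$, (di)natural in $m$, compatible with unitors/associators; morphisms (2-cells) are strength-preserving natural transformations. $\mathit{Tamb}$ is the bicategory of $M$-actegories, with hom-categories $\mathit{Tamb}_{C,D}$, identity 1-cells the hom-profunctors $C(-,=)$, and composition $(P\otimes Q)(c,e)=\int^{d}P(c,d)\times Q(d,e)$ for $P\in\mathit{Tamb}_{C,D},Q\in\mathit{Tamb}_{D,E}$. For $x\in C$, $R_x\in\mathit{Tamb}_{C,M}$ is $(c,n)\mapsto C(c,n\odot x)$ with strength $h\mapsto(m\odot h);a^{-1}_{m,n,x}$, and $L_x\in\mathit{Tamb}_{M,C}$ is $(n,c)\mapsto C(n\odot x,c)$ with strength $h\mapsto a_{m,n,x};(m\odot h)$. For $f:x\to y$ in $C$, $R_f:R_x\Rightarrow R_y$ postcomposes with $n\odot f$ and $L_f:L_y\Rightarrow L_x$ precomposes with $n\odot f$. *)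

theory Defs
  imports Main
begin

record ('o,'a) cat =
  Ob :: "'o set"
  Hom :: "'o \<Rightarrow> 'o \<Rightarrow> 'a set"
  cmp :: "'a \<Rightarrow> 'a \<Rightarrow> 'a"   (* cmp f g = f;g  (first f, then g) *)
  idm :: "'o \<Rightarrow> 'a"

definition category :: "('o,'a,'z) cat_scheme \<Rightarrow> bool" where
  "category C \<longleftrightarrow>
     (\<forall>a b. Hom C a b \<noteq> {} \<longrightarrow> a \<in> Ob C \<and> b \<in> Ob C) \<and>
     (\<forall>a\<in>Ob C. idm C a \<in> Hom C a a) \<and>
     (\<forall>a b c f g. f \<in> Hom C a b \<and> g \<in> Hom C b c \<longrightarrow> cmp C f g \<in> Hom C a c) \<and>
     (\<forall>a b f. f \<in> Hom C a b \<longrightarrow> cmp C (idm C a) f = f \<and> cmp C f (idm C b) = f) \<and>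
     (\<forall>a b c d f g h. f \<in> Hom C a b \<and> g \<in> Hom C b c \<and> h \<in> Hom C c d \<longrightarrow>
        cmp C (cmp C f g) h = cmp C f (cmp C g h))"

definition iso_pair :: "('o,'a,'z) cat_scheme \<Rightarrow> 'o \<Rightarrow> 'o \<Rightarrow> 'a \<Rightarrow> 'a \<Rightarrow> bool" where
  "iso_pair C a b f g \<longleftrightarrow> f \<in> Hom C a b \<and> g \<in> Hom C b a \<and>
     cmp C f g = idm C a \<and> cmp C g f = idm C b"

definition bifunctor ::
  "('o1,'a1,'z1) cat_scheme \<Rightarrow> ('o2,'a2,'z2) cat_scheme \<Rightarrow> ('o3,'a3,'z3) cat_scheme \<Rightarrow>
   ('o1 \<Rightarrow> 'o2 \<Rightarrow> 'o3) \<Rightarrow> ('a1 \<Rightarrow> 'a2 \<Rightarrow> 'a3) \<Rightarrow> bool" where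
  "bifunctor A B D Fo Fa \<longleftrightarrow>
     (\<forall>a\<in>Ob A. \<forall>b\<in>Ob B. Fo a b \<in> Ob D) \<and>
     (\<forall>a a' b b' u f. a \<in> Ob A \<and> a' \<in> Ob A \<and> b \<in> Ob B \<and> b' \<in> Ob B \<and>
        u \<in> Hom A a a' \<and> f \<in> Hom B b b' \<longrightarrow> Fa u f \<in> Hom D (Fo a b) (Fo a' b')) \<and>
     (\<forall>a\<in>Ob A. \<forall>b\<in>Ob B. Fa (idm A a) (idm B b) = idm D (Fo a b)) \<and>
     (\<forall>a a' a'' b b' b'' u u' f f'. a \<in> Ob A \<and> a' \<in> Ob A \<and> a'' \<in> Ob A \<and>
        b \<in> Ob B \<and> b' \<in> Ob B \<and> b'' \<in> Ob B \<and>
        u \<in> Hom A a a' \<and> u' \<in> Hom A a' a'' \<and> f \<in> Hom B b b' \<and> f' \<in> Hom B b' b'' \<longrightarrow>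
        Fa (cmp A u u') (cmp B f f') = cmp D (Fa u f) (Fa u' f'))"

record ('o,'a) moncat = "('o,'a) cat" +
  tens_o :: "'o \<Rightarrow> 'o \<Rightarrow> 'o"
  tens_a :: "'a \<Rightarrow> 'a \<Rightarrow> 'a"
  unit_o :: "'o"
  lam :: "'o \<Rightarrow> 'a"
  lam_inv :: "'o \<Rightarrow> 'a"
  rho :: "'o \<Rightarrow> 'a"
  rho_inv :: "'o \<Rightarrow> 'a"
  mas :: "'o \<Rightarrow> 'o \<Rightarrow> 'o \<Rightarrow> 'a"
  mas_inv :: "'o \<Rightarrow> 'o \<Rightarrow> 'o \<Rightarrow> 'a"

definition monoidal :: "('o,'a) moncat \<Rightarrow> bool" where
  "monoidal M \<longleftrightarrow> category M \<and> bifunctor M M M (tens_o M) (tens_a M) \<and> unit_o M \<in> Ob M \<and>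
   (\<forall>m\<in>Ob M. iso_pair M (tens_o M (unit_o M) m) m (lam M m) (lam_inv M m)) \<and>
   (\<forall>m\<in>Ob M. iso_pair M (tens_o M m (unit_o M)) m (rho M m) (rho_inv M m)) \<and>
   (\<forall>m\<in>Ob M. \<forall>n\<in>Ob M. \<forall>k\<in>Ob M.
      iso_pair M (tens_o M (tens_o M m n) k) (tens_o M m (tens_o M n k)) (mas M m n k) (mas_inv M m n k)) \<and>
   (\<forall>m m' u. m \<in> Ob M \<and> m' \<in> Ob M \<and> u \<in> Hom M m m' \<longrightarrow>
      cmp M (tens_a M (idm M (unit_o M)) u) (lam M m') = cmp M (lam M m) u \<and>
      cmp M (tens_a M u (idm M (unit_o M))) (rho M m') = cmp M (rho M m) u) \<and>
   (\<forall>m m' n n' k k' u v w. m \<in> Ob M \<and> m' \<in> Ob M \<and> n \<in> Ob M \<and> n' \<in> Ob M \<and> k \<in> Ob M \<and> k' \<in> Ob M \<and>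
      u \<in> Hom M m m' \<and> v \<in> Hom M n n' \<and> w \<in> Hom M k k' \<longrightarrow>
      cmp M (tens_a M (tens_a M u v) w) (mas M m' n' k') = cmp M (mas M m n k) (tens_a M u (tens_a M v w))) \<and>
   (\<forall>m\<in>Ob M. \<forall>n\<in>Ob M. \<forall>k\<in>Ob M. \<forall>l\<in>Ob M.
      cmp M (mas M (tens_o M m n) k l) (mas M m n (tens_o M k l)) =
      cmp M (cmp M (tens_a M (mas M m n k) (idm M l)) (mas M m (tens_o M n k) l))
            (tens_a M (idm M m) (mas M n k l))) \<and>
   (\<forall>m\<in>Ob M. \<forall>n\<in>Ob M.
      cmp M (mas M m (unit_o M) n) (tens_a M (idm M m) (lam M n)) = tens_a M (rho M m) (idm M n))"

record ('m,'ma,'o,'a) actg = "('o,'a) cat" +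
  act_o :: "'m \<Rightarrow> 'o \<Rightarrow> 'o"
  act_a :: "'ma \<Rightarrow> 'a \<Rightarrow> 'a"
  alam :: "'o \<Rightarrow> 'a"
  alam_inv :: "'o \<Rightarrow> 'a"
  aas :: "'m \<Rightarrow> 'm \<Rightarrow> 'o \<Rightarrow> 'a"
  aas_inv :: "'m \<Rightarrow> 'm \<Rightarrow> 'o \<Rightarrow> 'a"

definition actegory :: "('m,'ma) moncat \<Rightarrow> ('m,'ma,'o,'a) actg \<Rightarrow> bool" where
  "actegory M C \<longleftrightarrow> monoidal M \<and> category C \<and> bifunctor M C C (act_o C) (act_a C) \<and>
   (\<forall>x\<in>Ob C. iso_pair C (act_o C (unit_o M) x) x (alam C x) (alam_inv C x)) \<and>
   (\<forall>m\<in>Ob M. \<forall>n\<in>Ob M. \<forall>x\<in>Ob C.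
      iso_pair C (act_o C (tens_o M m n) x) (act_o C m (act_o C n x)) (aas C m n x) (aas_inv C m n x)) \<and>
   (\<forall>x y f. x \<in> Ob C \<and> y \<in> Ob C \<and> f \<in> Hom C x y \<longrightarrow>
      cmp C (act_a C (idm M (unit_o M)) f) (alam C y) = cmp C (alam C x) f) \<and>
   (\<forall>m m' n n' x x' u v f. m \<in> Ob M \<and> m' \<in> Ob M \<and> n \<in> Ob M \<and> n' \<in> Ob M \<and> x \<in> Ob C \<and> x' \<in> Ob C \<and>
      u \<in> Hom M m m' \<and> v \<in> Hom M n n' \<and> f \<in> Hom C x x' \<longrightarrow>
      cmp C (act_a C (tens_a M u v) f) (aas C m' n' x') = cmp C (aas C m n x) (act_a C u (act_a C v f))) \<and>
   (\<forall>m\<in>Ob M. \<forall>n\<in>Ob M. \<forall>k\<in>Ob M. \<forall>x\<in>Ob C.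
      cmp C (aas C (tens_o M m n) k x) (aas C m n (act_o C k x)) =
      cmp C (cmp C (act_a C (mas M m n k) (idm C x)) (aas C m (tens_o M n k) x))
            (act_a C (idm M m) (aas C n k x))) \<and>
   (\<forall>m\<in>Ob M. \<forall>x\<in>Ob C.
      cmp C (aas C m (unit_o M) x) (act_a C (idm M m) (alam C x)) = act_a C (rho M m) (idm C x)) \<and>
   (\<forall>m\<in>Ob M. \<forall>x\<in>Ob C.
      cmp C (aas C (unit_o M) m x) (alam C (act_o C m x)) = act_a C (lam M m) (idm C x))"

definition selfact :: "('m,'ma) moncat \<Rightarrow> ('m,'ma,'m,'ma) actg" where
  "selfact M = \<lparr> Ob = Ob M, Hom = Hom M, cmp = cmp M, idm = idm M,
     act_o = tens_o M, act_a = tens_a M, alam = lam M, alam_inv = lam_inv M,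
     aas = mas M, aas_inv = mas_inv M \<rparr>"

text \<open>plm P c' c d f p : P(c,d) -> P(c',d) for f : c' -> c;
  prm P c d d' g p : P(c,d) -> P(c,d') for g : d -> d';
  pst P m c d p : P(c,d) -> P(m.c, m.d).\<close>
record ('c,'ca,'d,'da,'m,'e) prof =
  pob :: "'c \<Rightarrow> 'd \<Rightarrow> 'e set"
  plm :: "'c \<Rightarrow> 'c \<Rightarrow> 'd \<Rightarrow> 'ca \<Rightarrow> 'e \<Rightarrow> 'e"
  prm :: "'c \<Rightarrow> 'd \<Rightarrow> 'd \<Rightarrow> 'da \<Rightarrow> 'e \<Rightarrow> 'e"
  pst :: "'m \<Rightarrow> 'c \<Rightarrow> 'd \<Rightarrow> 'e \<Rightarrow> 'e"

definition tamb_mor where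
  "tamb_mor M A B P Q \<alpha> \<longleftrightarrow>
    (\<forall>a\<in>Ob A. \<forall>b\<in>Ob B. \<forall>p\<in>pob P a b. \<alpha> a b p \<in> pob Q a b) \<and>
    (\<forall>a a' b f p. a \<in> Ob A \<and> a' \<in> Ob A \<and> b \<in> Ob B \<and> f \<in> Hom A a' a \<and> p \<in> pob P a b \<longrightarrow>
        \<alpha> a' b (plm P a' a b f p) = plm Q a' a b f (\<alpha> a b p)) \<and>
    (\<forall>a b b' g p. a \<in> Ob A \<and> b \<in> Ob B \<and> b' \<in> Ob B \<and> g \<in> Hom B b b' \<and> p \<in> pob P a b \<longrightarrow>
        \<alpha> a b' (prm P a b b' g p) = prm Q a b b' g (\<alpha> a b p)) \<and>
    (\<forall>m a b p. m \<in> Ob M \<and> a \<in> Ob A \<and> b \<in> Ob B \<and> p \<in> pob P a b \<longrightarrow>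
        \<alpha> (act_o A m a) (act_o B m b) (pst P m a b p) = pst Q m a b (\<alpha> a b p))"

definition ce_step where
  "ce_step D P Q c e = {((d', prm P c d d' g p, q), (d, p, plm Q d d' e g q)) | d d' g p q.
      d \<in> Ob D \<and> d' \<in> Ob D \<and> g \<in> Hom D d d' \<and> p \<in> pob P c d \<and> q \<in> pob Q d' e}"

definition ce_cls where
  "ce_cls D P Q c e t = {t'. (t, t') \<in> (ce_step D P Q c e \<union> (ce_step D P Q c e)\<inverse>)\<^sup>*}"

definition coend where
  "coend D P Q c e = ce_cls D P Q c e ` {(d, p, q). d \<in> Ob D \<and> p \<in> pob P c d \<and> q \<in> pob Q d e}"

definition rep :: "'a set \<Rightarrow> 'a" where
  "rep X = (SOME t. t \<in> X)"

text \<open>Composite P (x) Q of P : A -|-> D and Q : D -|-> B (profunctor action and strength on representatives).\<close>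
definition pcomp where
  "pcomp A D B P Q = \<lparr> pob = coend D P Q,
     plm = (\<lambda>c' c e f \<xi>. case rep \<xi> of (d, p, q) \<Rightarrow> ce_cls D P Q c' e (d, plm P c' c d f p, q)),
     prm = (\<lambda>c e e' g \<xi>. case rep \<xi> of (d, p, q) \<Rightarrow> ce_cls D P Q c e' (d, p, prm Q d e e' g q)),
     pst = (\<lambda>m c e \<xi>. case rep \<xi> of (d, p, q) \<Rightarrow>
        ce_cls D P Q (act_o A m c) (act_o B m e) (act_o D m d, pst P m c d p, pst Q m d e q)) \<rparr>"

text \<open>Hom profunctor A(-,=) (identity 1-cell), strength h |-> m . h.\<close>
definition homP where
  "homP M A = \<lparr> pob = Hom A, plm = (\<lambda>c' c d f h. cmp A f h), prm = (\<lambda>c d d' g h. cmp A h g),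
     pst = (\<lambda>m c d h. act_a A (idm M m) h) \<rparr>"

definition Rp where
  "Rp M C x = \<lparr> pob = (\<lambda>c n. Hom C c (act_o C n x)),
     plm = (\<lambda>c' c n f h. cmp C f h),
     prm = (\<lambda>c n n' u h. cmp C h (act_a C u (idm C x))),
     pst = (\<lambda>m c n h. cmp C (act_a C (idm M m) h) (aas_inv C m n x)) \<rparr>"

definition Lp where
  "Lp M C x = \<lparr> pob = (\<lambda>n c. Hom C (act_o C n x) c),
     plm = (\<lambda>n' n c u h. cmp C (act_a C u (idm C x)) h),
     prm = (\<lambda>n c c' g h. cmp C h g),
     pst = (\<lambda>m n c h. cmp C (aas C m n x) (act_a C (idm M m) h)) \<rparr>"

definition Rmor where
  "Rmor M C f = (\<lambda>c n h. cmp C h (act_a C (idm M n) f))"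

definition Lmor where
  "Lmor M C f = (\<lambda>n c h. cmp C (act_a C (idm M n) f) h)"

definition eps where
  "eps C x = (\<lambda>c c' \<xi>. case rep \<xi> of (n, h, k) \<Rightarrow> cmp C h k)"

definition eta where  (* h |-> h . x, viewed in the coend via g |-> [(k'.x, g, id)] *)
  "eta M C x = (\<lambda>k k' h. ce_cls C (Lp M C x) (Rp M C x) k k'
      (act_o C k' x, act_a C h (idm C x), idm C (act_o C k' x)))"

definition wL where
  "wL D P' Q \<alpha> c e \<xi> = (case rep \<xi> of (d, p, q) \<Rightarrow> ce_cls D P' Q c e (d, \<alpha> c d p, q))"

definition wR where
  "wR D P Q' \<beta> c e \<xi> = (case rep \<xi> of (d, p, q) \<Rightarrow> ce_cls D P Q' c e (d, p, \<beta> d e q))"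

definition lunit where
  "lunit P c d \<xi> = (case rep \<xi> of (c', f, p) \<Rightarrow> plm P c c' d f p)"

definition lunitI where
  "lunitI M A P c d p = ce_cls A (homP M A) P c d (c, idm A c, p)"

definition runit where
  "runit P c d \<xi> = (case rep \<xi> of (d', p, g) \<Rightarrow> prm P c d' d g p)"

definition runitI where
  "runitI M B P c d p = ce_cls B P (homP M B) c d (d, p, idm B d)"

definition assocF where
  "assocF D E F P Q R c f \<xi> = (case rep \<xi> of (e, \<zeta>, r) \<Rightarrow> case rep \<zeta> of (d, p, q) \<Rightarrow>
      ce_cls D P (pcomp D E F Q R) c f (d, p, ce_cls E Q R d f (e, q, r)))"

definition assocB where
  "assocB A D E P Q R c f \<xi> = (case rep \<xi> of (d, p, \<zeta>) \<Rightarrow> case rep \<zeta> of (e, q, r) \<Rightarrow>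
      ce_cls E (pcomp A D E P Q) R c f (e, ce_cls D P Q c e (d, p, q), r))"

end

theory Submission
  imports Defs
begin


lemma rt_inv:
  assumes "\<And>a b. (a,b) \<in> S \<Longrightarrow> \<phi> a = \<phi> b" and "(t,t') \<in> (S \<union> S\<inverse>)\<^sup>*"
  shows "\<phi> t' = \<phi> t"
  using assms(2) by (induction rule: rtrancl_induct) (auto dest: assms(1))

lemma cls_self: "t \<in> ce_cls D P Q c e t"
  unfolding ce_cls_def by simp

lemma rep_in_cls: "rep (ce_cls D P Q c e t) \<in> ce_cls D P Q c e t"
  unfolding rep_def by (rule someI, rule cls_self)

lemma cls_inv:
  assumes "\<And>a b. (a,b) \<in> ce_step D P Q c e \<Longrightarrow> \<phi> a = \<phi> b" and "t' \<in> ce_cls D P Q c e t"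
  shows "\<phi> t' = \<phi> t"
proof -
  have "(t,t') \<in> (ce_step D P Q c e \<union> (ce_step D P Q c e)\<inverse>)\<^sup>*" using assms(2) unfolding ce_cls_def by simp
  thus ?thesis using rt_inv[where \<phi>=\<phi> and S="ce_step D P Q c e"] assms(1) by blast
qed

lemma cls_eq:
  assumes "t' \<in> ce_cls D P Q c e t"
  shows "ce_cls D P Q c e t' = ce_cls D P Q c e t"
proof -
  let ?R = "(ce_step D P Q c e \<union> (ce_step D P Q c e)\<inverse>)\<^sup>*"
  have s: "sym ?R" by (intro sym_rtrancl sym_Un_converse)
  have tt: "(t,t') \<in> ?R" using assms unfolding ce_cls_def by simp
  hence "(t',t) \<in> ?R" using s by (meson symD)
  show ?thesis unfolding ce_cls_def using tt \<open>(t',t) \<in> ?R\<close>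
    by (auto intro: rtrancl_trans)
qed

lemma ce_stepE:
  assumes "(a,b) \<in> ce_step D P Q c e"
  obtains d d' g p q where "a = (d', prm P c d d' g p, q)" "b = (d, p, plm Q d d' e g q)"
    "d \<in> Ob D" "d' \<in> Ob D" "g \<in> Hom D d d'" "p \<in> pob P c d" "q \<in> pob Q d' e"
  using assms unfolding ce_step_def by blast

lemma step_eq:
  assumes "d \<in> Ob D" "d' \<in> Ob D" "g \<in> Hom D d d'" "p \<in> pob P c d" "q \<in> pob Q d' e"
  shows "ce_cls D P Q c e (d', prm P c d d' g p, q) = ce_cls D P Q c e (d, p, plm Q d d' e g q)"
proof -
  have "((d', prm P c d d' g p, q), (d, p, plm Q d d' e g q)) \<in> ce_step D P Q c e"
    unfolding ce_step_def using assms by blast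
  hence "(d, p, plm Q d d' e g q) \<in> ce_cls D P Q c e (d', prm P c d d' g p, q)"
    unfolding ce_cls_def by auto
  thus ?thesis by (rule cls_eq[symmetric])
qed

definition valid where
  "valid D P Q c e t \<longleftrightarrow> (case t of (d,p,q) \<Rightarrow> d \<in> Ob D \<and> p \<in> pob P c d \<and> q \<in> pob Q d e)"

lemma valid_cls:
  assumes cl: "\<And>d d' g p. d \<in> Ob D \<Longrightarrow> d' \<in> Ob D \<Longrightarrow> g \<in> Hom D d d' \<Longrightarrow> p \<in> pob P c d \<Longrightarrow> prm P c d d' g p \<in> pob P c d'"
   "\<And>d d' g q. d \<in> Ob D \<Longrightarrow> d' \<in> Ob D \<Longrightarrow> g \<in> Hom D d d' \<Longrightarrow> q \<in> pob Q d' e \<Longrightarrow> plm Q d d' e g q \<in> pob Q d e"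
  and "t' \<in> ce_cls D P Q c e t" "valid D P Q c e t"
  shows "valid D P Q c e t'"
proof -
  have "valid D P Q c e t' = valid D P Q c e t"
    by (rule cls_inv[OF _ assms(3)], erule ce_stepE, auto simp: valid_def cl)
  thus ?thesis using assms by simp
qed

lemma coend_rep:
  assumes cl: "\<And>d d' g p. d \<in> Ob D \<Longrightarrow> d' \<in> Ob D \<Longrightarrow> g \<in> Hom D d d' \<Longrightarrow> p \<in> pob P c d \<Longrightarrow> prm P c d d' g p \<in> pob P c d'"
   "\<And>d d' g q. d \<in> Ob D \<Longrightarrow> d' \<in> Ob D \<Longrightarrow> g \<in> Hom D d d' \<Longrightarrow> q \<in> pob Q d' e \<Longrightarrow> plm Q d d' e g q \<in> pob Q d e"
  and "\<xi> \<in> coend D P Q c e"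
  obtains d p q where "rep \<xi> = (d,p,q)" "\<xi> = ce_cls D P Q c e (d,p,q)"
    "d \<in> Ob D" "p \<in> pob P c d" "q \<in> pob Q d e"
proof -
  obtain t where t: "valid D P Q c e t" "\<xi> = ce_cls D P Q c e t"
    using assms(3) unfolding coend_def valid_def by auto
  have r: "rep \<xi> \<in> ce_cls D P Q c e t" using t rep_in_cls by metis
  have v: "valid D P Q c e (rep \<xi>)" using valid_cls[OF cl r t(1)] .
  have e: "\<xi> = ce_cls D P Q c e (rep \<xi>)" using cls_eq[OF r] t by simp
  obtain d p q where "rep \<xi> = (d,p,q)" by (cases "rep \<xi>") auto
  thus ?thesis using that v e unfolding valid_def by auto
qed

lemma cls_in_coend:
  assumes "d \<in> Ob D" "p \<in> pob P c d" "q \<in> pob Q d e"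
  shows "ce_cls D P Q c e (d,p,q) \<in> coend D P Q c e"
  unfolding coend_def using assms by blast

lemma rep_case:
  assumes "\<And>d d' g p q. d \<in> Ob D \<Longrightarrow> d' \<in> Ob D \<Longrightarrow> g \<in> Hom D d d' \<Longrightarrow> p \<in> pob P c d \<Longrightarrow>
     q \<in> pob Q d' e \<Longrightarrow> G d' (prm P c d d' g p) q = G d p (plm Q d d' e g q)"
  shows "(case rep (ce_cls D P Q c e (d0,p0,q0)) of (d,p,q) \<Rightarrow> G d p q) = G d0 p0 q0"
proof -
  have "(\<lambda>(d,p,q). G d p q) (rep (ce_cls D P Q c e (d0,p0,q0))) = (\<lambda>(d,p,q). G d p q) (d0,p0,q0)"
    by (rule cls_inv[OF _ rep_in_cls], erule ce_stepE, simp add: assms)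
  thus ?thesis by simp
qed



locale actx =
  fixes M :: "('m,'ma) moncat" and C :: "('m,'ma,'c,'ca) actg"
  assumes act: "actegory M C"
begin

lemma monM: "monoidal M" using act unfolding actegory_def by blast
lemma catC: "category C" using act unfolding actegory_def by blast
lemma catM: "category M" using monM unfolding monoidal_def by blast
lemma bifA: "bifunctor M C C (act_o C) (act_a C)" using act unfolding actegory_def by blast
lemma bifT: "bifunctor M M M (tens_o M) (tens_a M)" using monM unfolding monoidal_def by blast

lemma CO1: "f \<in> Hom C a b \<Longrightarrow> a \<in> Ob C" using catC unfolding category_def by blast
lemma CO2: "f \<in> Hom C a b \<Longrightarrow> b \<in> Ob C" using catC unfolding category_def by blast
lemma Ci: "a \<in> Ob C \<Longrightarrow> idm C a \<in> Hom C a a" using catC unfolding category_def by blast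
lemma Cc: "f \<in> Hom C a b \<Longrightarrow> g \<in> Hom C b c \<Longrightarrow> cmp C f g \<in> Hom C a c" using catC unfolding category_def by blast
lemma Cl: "f \<in> Hom C a b \<Longrightarrow> cmp C (idm C a) f = f" using catC unfolding category_def by blast
lemma Cr: "f \<in> Hom C a b \<Longrightarrow> cmp C f (idm C b) = f" using catC unfolding category_def by blast
lemma Ca: "f \<in> Hom C a b \<Longrightarrow> g \<in> Hom C b c \<Longrightarrow> h \<in> Hom C c d \<Longrightarrow> cmp C (cmp C f g) h = cmp C f (cmp C g h)"
  using catC unfolding category_def by blast

lemma MO1: "f \<in> Hom M a b \<Longrightarrow> a \<in> Ob M" using catM unfolding category_def by blast
lemma MO2: "f \<in> Hom M a b \<Longrightarrow> b \<in> Ob M" using catM unfolding category_def by blast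
lemma Mi: "a \<in> Ob M \<Longrightarrow> idm M a \<in> Hom M a a" using catM unfolding category_def by blast
lemma Mc: "f \<in> Hom M a b \<Longrightarrow> g \<in> Hom M b c \<Longrightarrow> cmp M f g \<in> Hom M a c" using catM unfolding category_def by blast
lemma Ml: "f \<in> Hom M a b \<Longrightarrow> cmp M (idm M a) f = f" using catM unfolding category_def by blast
lemma Mr: "f \<in> Hom M a b \<Longrightarrow> cmp M f (idm M b) = f" using catM unfolding category_def by blast

lemma Ao: "m \<in> Ob M \<Longrightarrow> y \<in> Ob C \<Longrightarrow> act_o C m y \<in> Ob C" using bifA unfolding bifunctor_def by blast
lemma Aa: "u \<in> Hom M m m' \<Longrightarrow> f \<in> Hom C y y' \<Longrightarrow> act_a C u f \<in> Hom C (act_o C m y) (act_o C m' y')"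
  using bifA MO1 MO2 CO1 CO2 unfolding bifunctor_def by meson
lemma Aid: "m \<in> Ob M \<Longrightarrow> y \<in> Ob C \<Longrightarrow> act_a C (idm M m) (idm C y) = idm C (act_o C m y)"
  using bifA unfolding bifunctor_def by blast
lemma Acomp: "u \<in> Hom M m m' \<Longrightarrow> u' \<in> Hom M m' m'' \<Longrightarrow> f \<in> Hom C y y' \<Longrightarrow> f' \<in> Hom C y' y'' \<Longrightarrow>
   act_a C (cmp M u u') (cmp C f f') = cmp C (act_a C u f) (act_a C u' f')"
proof -
  assume a: "u \<in> Hom M m m'" "u' \<in> Hom M m' m''" "f \<in> Hom C y y'" "f' \<in> Hom C y' y''"
  have "m \<in> Ob M" "m' \<in> Ob M" "m'' \<in> Ob M" "y \<in> Ob C" "y' \<in> Ob C" "y'' \<in> Ob C"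
    using a MO1 MO2 CO1 CO2 by blast+
  thus ?thesis using a bifA unfolding bifunctor_def by blast
qed

lemma To: "m \<in> Ob M \<Longrightarrow> n \<in> Ob M \<Longrightarrow> tens_o M m n \<in> Ob M" using bifT unfolding bifunctor_def by blast
lemma Ta: "u \<in> Hom M m m' \<Longrightarrow> v \<in> Hom M n n' \<Longrightarrow> tens_a M u v \<in> Hom M (tens_o M m n) (tens_o M m' n')"
  using bifT MO1 MO2 unfolding bifunctor_def by meson

lemma aasiso: "\<forall>m\<in>Ob M. \<forall>n\<in>Ob M. \<forall>x\<in>Ob C.
      iso_pair C (act_o C (tens_o M m n) x) (act_o C m (act_o C n x)) (aas C m n x) (aas_inv C m n x)"
  using act unfolding actegory_def by (elim conjE) assumption
lemma aasnat: "(\<forall>m m' n n' x x' u v f. m \<in> Ob M \<and> m' \<in> Ob M \<and> n \<in> Ob M \<and> n' \<in> Ob M \<and> x \<in> Ob C \<and> x' \<in> Ob C \<and>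
      u \<in> Hom M m m' \<and> v \<in> Hom M n n' \<and> f \<in> Hom C x x' \<longrightarrow>
      cmp C (act_a C (tens_a M u v) f) (aas C m' n' x') = cmp C (aas C m n x) (act_a C u (act_a C v f)))"
  using act unfolding actegory_def by (elim conjE) assumption
lemma aas_in: "m \<in> Ob M \<Longrightarrow> n \<in> Ob M \<Longrightarrow> y \<in> Ob C \<Longrightarrow> aas C m n y \<in> Hom C (act_o C (tens_o M m n) y) (act_o C m (act_o C n y))"
  using aasiso unfolding iso_pair_def by blast
lemma aasi_in: "m \<in> Ob M \<Longrightarrow> n \<in> Ob M \<Longrightarrow> y \<in> Ob C \<Longrightarrow> aas_inv C m n y \<in> Hom C (act_o C m (act_o C n y)) (act_o C (tens_o M m n) y)"
  using aasiso unfolding iso_pair_def by blast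
lemma aas_ii: "m \<in> Ob M \<Longrightarrow> n \<in> Ob M \<Longrightarrow> y \<in> Ob C \<Longrightarrow> cmp C (aas C m n y) (aas_inv C m n y) = idm C (act_o C (tens_o M m n) y)"
  using aasiso unfolding iso_pair_def by blast
lemma aas_ii2: "m \<in> Ob M \<Longrightarrow> n \<in> Ob M \<Longrightarrow> y \<in> Ob C \<Longrightarrow> cmp C (aas_inv C m n y) (aas C m n y) = idm C (act_o C m (act_o C n y))"
  using aasiso unfolding iso_pair_def by blast
lemma aas_nat: "u \<in> Hom M m m' \<Longrightarrow> v \<in> Hom M n n' \<Longrightarrow> f \<in> Hom C y y' \<Longrightarrow>
   cmp C (act_a C (tens_a M u v) f) (aas C m' n' y') = cmp C (aas C m n y) (act_a C u (act_a C v f))"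
proof -
  assume a: "u \<in> Hom M m m'" "v \<in> Hom M n n'" "f \<in> Hom C y y'"
  have "m \<in> Ob M" "m' \<in> Ob M" "n \<in> Ob M" "n' \<in> Ob M" "y \<in> Ob C" "y' \<in> Ob C"
    using a MO1 MO2 CO1 CO2 by blast+
  thus ?thesis using a aasnat by blast
qed

end


lemma selfact_simps[simp]: "Ob (selfact M) = Ob M" "Hom (selfact M) = Hom M" "cmp (selfact M) = cmp M"
  "idm (selfact M) = idm M" "act_o (selfact M) = tens_o M" "act_a (selfact M) = tens_a M"
  by (simp_all add: selfact_def)

lemma Rp_simps[simp]: "pob (Rp M C x) = (\<lambda>c n. Hom C c (act_o C n x))"
  "plm (Rp M C x) = (\<lambda>c' c n f h. cmp C f h)"
  "prm (Rp M C x) = (\<lambda>c n n' u h. cmp C h (act_a C u (idm C x)))"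
  "pst (Rp M C x) = (\<lambda>m c n h. cmp C (act_a C (idm M m) h) (aas_inv C m n x))"
  by (simp_all add: Rp_def)
lemma Lp_simps[simp]: "pob (Lp M C x) = (\<lambda>n c. Hom C (act_o C n x) c)"
  "plm (Lp M C x) = (\<lambda>n' n c u h. cmp C (act_a C u (idm C x)) h)"
  "prm (Lp M C x) = (\<lambda>n c c' g h. cmp C h g)"
  "pst (Lp M C x) = (\<lambda>m n c h. cmp C (aas C m n x) (act_a C (idm M m) h))"
  by (simp_all add: Lp_def)
lemma homP_simps[simp]: "pob (homP M A) = Hom A" "plm (homP M A) = (\<lambda>c' c d f h. cmp A f h)"
  "prm (homP M A) = (\<lambda>c d d' g h. cmp A h g)" "pst (homP M A) = (\<lambda>m c d h. act_a A (idm M m) h)"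
  by (simp_all add: homP_def)
lemma pcomp_simps[simp]: "pob (pcomp A D B P Q) = coend D P Q"
  by (simp add: pcomp_def)
lemma pcomp_ops: "plm (pcomp A D B P Q) = (\<lambda>c' c e f \<xi>. case rep \<xi> of (d, p, q) \<Rightarrow> ce_cls D P Q c' e (d, plm P c' c d f p, q))"
  "prm (pcomp A D B P Q) = (\<lambda>c e e' g \<xi>. case rep \<xi> of (d, p, q) \<Rightarrow> ce_cls D P Q c e' (d, p, prm Q d e e' g q))"
  "pst (pcomp A D B P Q) = (\<lambda>m c e \<xi>. case rep \<xi> of (d, p, q) \<Rightarrow>
        ce_cls D P Q (act_o A m c) (act_o B m e) (act_o D m d, pst P m c d p, pst Q m d e q))"
  by (simp_all add: pcomp_def)

context actx begin

lemma gx: "x \<in> Ob C \<Longrightarrow> g \<in> Hom M n n' \<Longrightarrow> act_a C g (idm C x) \<in> Hom C (act_o C n x) (act_o C n' x)"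
  by (rule Aa, assumption, rule Ci)

lemma repSRL:
  assumes "x \<in> Ob C" "x' \<in> Ob C" "\<xi> \<in> coend (selfact M) (Rp M C x) (Lp M C x') c c'"
  obtains n h k where "rep \<xi> = (n,h,k)" "\<xi> = ce_cls (selfact M) (Rp M C x) (Lp M C x') c c' (n,h,k)"
    "n \<in> Ob M" "h \<in> Hom C c (act_o C n x)" "k \<in> Hom C (act_o C n x') c'"
  apply (rule coend_rep[OF _ _ assms(3)])
  using assms(1,2) by (auto intro: Cc gx)

lemma repCLR:
  assumes "x \<in> Ob C" "x' \<in> Ob C" "\<xi> \<in> coend C (Lp M C x) (Rp M C x') k k'"
  obtains d p q where "rep \<xi> = (d,p,q)" "\<xi> = ce_cls C (Lp M C x) (Rp M C x') k k' (d,p,q)"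
    "d \<in> Ob C" "p \<in> Hom C (act_o C k x) d" "q \<in> Hom C d (act_o C k' x')"
  apply (rule coend_rep[OF _ _ assms(3)])
  using assms(1,2) by (auto intro: Cc gx)

lemma eps_val: assumes "x \<in> Ob C"
  shows "eps C z c c' (ce_cls (selfact M) (Rp M C x) (Lp M C x) c c' (n,h,k)) = cmp C h k"
  unfolding eps_def
  by (rule rep_case) (simp, meson Ca gx assms)

lemma eps_val2: assumes "x \<in> Ob C"
  shows "eps C z k k' (ce_cls C (Lp M C x) (Rp M C x) k k' (d,q,r)) = cmp C q r"
  unfolding eps_def
  by (rule rep_case) (simp, meson Ca gx assms)


lemma eps_in: assumes "x \<in> Ob C" "\<xi> \<in> coend (selfact M) (Rp M C x) (Lp M C x) c c'"
  shows "eps C x c c' \<xi> \<in> Hom C c c'"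
proof -
  obtain n h k where r: "rep \<xi> = (n,h,k)" "n \<in> Ob M" "h \<in> Hom C c (act_o C n x)" "k \<in> Hom C (act_o C n x) c'"
    using repSRL[OF assms(1) assms(1) assms(2)] by metis
  show ?thesis unfolding eps_def using r by (simp add: Cc)
qed

lemma eps_rep: "rep \<xi> = (n,h,k) \<Longrightarrow> eps C x c c' \<xi> = cmp C h k"
  unfolding eps_def by simp

lemma eps_plm: assumes "x \<in> Ob C" "\<xi> \<in> coend (selfact M) (Rp M C x) (Lp M C x) c c'" "f \<in> Hom C c'' c"
  shows "eps C x c'' c' (plm (pcomp C (selfact M) C (Rp M C x) (Lp M C x)) c'' c c' f \<xi>) = cmp C f (eps C x c c' \<xi>)"
proof -
  obtain n h k where r: "rep \<xi> = (n,h,k)" "n \<in> Ob M" "h \<in> Hom C c (act_o C n x)" "k \<in> Hom C (act_o C n x) c'"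
    using repSRL[OF assms(1) assms(1) assms(2)] by metis
  show ?thesis using r assms by (simp add: eps_val eps_rep Ca pcomp_ops)
qed

lemma eps_prm: assumes "x \<in> Ob C" "\<xi> \<in> coend (selfact M) (Rp M C x) (Lp M C x) c c'" "g \<in> Hom C c' c''"
  shows "eps C x c c'' (prm (pcomp C (selfact M) C (Rp M C x) (Lp M C x)) c c' c'' g \<xi>) = cmp C (eps C x c c' \<xi>) g"
proof -
  obtain n h k where r: "rep \<xi> = (n,h,k)" "n \<in> Ob M" "h \<in> Hom C c (act_o C n x)" "k \<in> Hom C (act_o C n x) c'"
    using repSRL[OF assms(1) assms(1) assms(2)] by metis
  show ?thesis using r assms by (simp add: eps_val eps_rep Ca pcomp_ops)
qed

lemma eps_pst: assumes "x \<in> Ob C" "\<xi> \<in> coend (selfact M) (Rp M C x) (Lp M C x) c c'" "m \<in> Ob M"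
  shows "eps C x (act_o C m c) (act_o C m c') (pst (pcomp C (selfact M) C (Rp M C x) (Lp M C x)) m c c' \<xi>)
     = act_a C (idm M m) (eps C x c c' \<xi>)"
proof -
  obtain n h k where r: "rep \<xi> = (n,h,k)" "n \<in> Ob M" "h \<in> Hom C c (act_o C n x)" "k \<in> Hom C (act_o C n x) c'"
    using repSRL[OF assms(1) assms(1) assms(2)] by metis
  define A where "A = act_a C (idm M m) h"
  define K where "K = act_a C (idm M m) k"
  define B where "B = aas_inv C m n x"
  define B' where "B' = aas C m n x"
  have A: "A \<in> Hom C (act_o C m c) (act_o C m (act_o C n x))" unfolding A_def using r assms by (simp add: Aa Mi)
  have K: "K \<in> Hom C (act_o C m (act_o C n x)) (act_o C m c')" unfolding K_def using r assms by (simp add: Aa Mi)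
  have B: "B \<in> Hom C (act_o C m (act_o C n x)) (act_o C (tens_o M m n) x)" unfolding B_def using r assms by (simp add: aasi_in)
  have B': "B' \<in> Hom C (act_o C (tens_o M m n) x) (act_o C m (act_o C n x))" unfolding B'_def using r assms by (simp add: aas_in)
  have "eps C x (act_o C m c) (act_o C m c') (pst (pcomp C (selfact M) C (Rp M C x) (Lp M C x)) m c c' \<xi>)
      = cmp C (cmp C A B) (cmp C B' K)"
    using r assms by (simp add: eps_val A_def B_def B'_def K_def pcomp_ops)
  also have "\<dots> = cmp C A (cmp C (cmp C B B') K)" using Ca[OF A B Cc[OF B' K]] Ca[OF B B' K] by simp
  also have "\<dots> = cmp C A K" using r assms K by (simp add: B_def B'_def aas_ii2 Cl)
  also have "\<dots> = act_a C (cmp M (idm M m) (idm M m)) (cmp C h k)"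
    unfolding A_def K_def using Acomp[OF Mi[OF assms(3)] Mi[OF assms(3)] r(3) r(4)] by simp
  also have "\<dots> = act_a C (idm M m) (eps C x c c' \<xi>)" using r assms Ml[OF Mi[OF assms(3)]] by (simp add: eps_rep)
  finally show ?thesis .
qed

lemma eps_mor: assumes "x \<in> Ob C"
  shows "tamb_mor M C C (pcomp C (selfact M) C (Rp M C x) (Lp M C x)) (homP M C) (eps C x)"
  unfolding tamb_mor_def using assms by (simp add: eps_in eps_plm eps_prm eps_pst)

end

context actx begin

lemma pc_plm_cls: assumes "x \<in> Ob C" "f \<in> Hom M k'' k"
  shows "plm (pcomp (selfact M) C (selfact M) (Lp M C x) (Rp M C x)) k'' k k' f (ce_cls C (Lp M C x) (Rp M C x) k k' (d0,p0,q0))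
     = ce_cls C (Lp M C x) (Rp M C x) k'' k' (d0, cmp C (act_a C f (idm C x)) p0, q0)"
proof -
  have "(case rep (ce_cls C (Lp M C x) (Rp M C x) k k' (d0,p0,q0)) of (d,p,q) \<Rightarrow>
     ce_cls C (Lp M C x) (Rp M C x) k'' k' (d, plm (Lp M C x) k'' k d f p, q))
     = ce_cls C (Lp M C x) (Rp M C x) k'' k' (d0, plm (Lp M C x) k'' k d0 f p0, q0)"
  proof (rule rep_case[where G="\<lambda>d p q. ce_cls C (Lp M C x) (Rp M C x) k'' k' (d, plm (Lp M C x) k'' k d f p, q)"])
  fix d d' g p q
  assume a: "d \<in> Ob C" "d' \<in> Ob C" "g \<in> Hom C d d'" "p \<in> pob (Lp M C x) k d" "q \<in> pob (Rp M C x) d' k'"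
  have F: "act_a C f (idm C x) \<in> Hom C (act_o C k'' x) (act_o C k x)" using gx assms by blast
  have p: "p \<in> Hom C (act_o C k x) d" using a by simp
  have e: "cmp C (act_a C f (idm C x)) (cmp C p g) = cmp C (cmp C (act_a C f (idm C x)) p) g"
    using Ca[OF F p a(3)] by simp
  show "ce_cls C (Lp M C x) (Rp M C x) k'' k' (d', plm (Lp M C x) k'' k d' f (prm (Lp M C x) k d d' g p), q) =
        ce_cls C (Lp M C x) (Rp M C x) k'' k' (d, plm (Lp M C x) k'' k d f p, plm (Rp M C x) d d' k' g q)"
    using step_eq[OF a(1,2,3), of "cmp C (act_a C f (idm C x)) p" "Lp M C x" k'' q "Rp M C x" k'] a F p
    by (simp add: e Cc)
  qed
  thus ?thesis by (simp add: pcomp_ops)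
qed

lemma pc_prm_cls: assumes "x \<in> Ob C" "g \<in> Hom M k' k''"
  shows "prm (pcomp (selfact M) C (selfact M) (Lp M C x) (Rp M C x)) k k' k'' g (ce_cls C (Lp M C x) (Rp M C x) k k' (d0,p0,q0))
     = ce_cls C (Lp M C x) (Rp M C x) k k'' (d0, p0, cmp C q0 (act_a C g (idm C x)))"
proof -
  have "(case rep (ce_cls C (Lp M C x) (Rp M C x) k k' (d0,p0,q0)) of (d,p,q) \<Rightarrow>
     ce_cls C (Lp M C x) (Rp M C x) k k'' (d, p, prm (Rp M C x) d k' k'' g q))
     = ce_cls C (Lp M C x) (Rp M C x) k k'' (d0, p0, prm (Rp M C x) d0 k' k'' g q0)"
  proof (rule rep_case[where G="\<lambda>d p q. ce_cls C (Lp M C x) (Rp M C x) k k'' (d, p, prm (Rp M C x) d k' k'' g q)"])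
  fix d d' G p q
  assume a: "d \<in> Ob C" "d' \<in> Ob C" "G \<in> Hom C d d'" "p \<in> pob (Lp M C x) k d" "q \<in> pob (Rp M C x) d' k'"
  have F: "act_a C g (idm C x) \<in> Hom C (act_o C k' x) (act_o C k'' x)" using gx assms by blast
  have q: "q \<in> Hom C d' (act_o C k' x)" using a by simp
  have e: "cmp C (cmp C G q) (act_a C g (idm C x)) = cmp C G (cmp C q (act_a C g (idm C x)))"
    using Ca[OF a(3) q F] by simp
  show "ce_cls C (Lp M C x) (Rp M C x) k k'' (d', prm (Lp M C x) k d d' G p, prm (Rp M C x) d' k' k'' g q) =
        ce_cls C (Lp M C x) (Rp M C x) k k'' (d, p, prm (Rp M C x) d k' k'' g (plm (Rp M C x) d d' k' G q))"
    using step_eq[OF a(1,2,3), of p "Lp M C x" k "cmp C q (act_a C g (idm C x))" "Rp M C x" k''] a F q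
    by (simp add: e Cc)
  qed
  thus ?thesis by (simp add: pcomp_ops)
qed

lemma pc_pst_cls: assumes "x \<in> Ob C" "m \<in> Ob M" "k \<in> Ob M" "k' \<in> Ob M"
  shows "pst (pcomp (selfact M) C (selfact M) (Lp M C x) (Rp M C x)) m k k' (ce_cls C (Lp M C x) (Rp M C x) k k' (d0,p0,q0))
     = ce_cls C (Lp M C x) (Rp M C x) (tens_o M m k) (tens_o M m k')
         (act_o C m d0, cmp C (aas C m k x) (act_a C (idm M m) p0), cmp C (act_a C (idm M m) q0) (aas_inv C m k' x))"
proof -
  have "(case rep (ce_cls C (Lp M C x) (Rp M C x) k k' (d0,p0,q0)) of (d,p,q) \<Rightarrow>
     ce_cls C (Lp M C x) (Rp M C x) (act_o (selfact M) m k) (act_o (selfact M) m k') (act_o C m d, pst (Lp M C x) m k d p, pst (Rp M C x) m d k' q))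
    = ce_cls C (Lp M C x) (Rp M C x) (act_o (selfact M) m k) (act_o (selfact M) m k') (act_o C m d0, pst (Lp M C x) m k d0 p0, pst (Rp M C x) m d0 k' q0)"
  proof (rule rep_case[where G="\<lambda>d p q. ce_cls C (Lp M C x) (Rp M C x) (act_o (selfact M) m k) (act_o (selfact M) m k') (act_o C m d, pst (Lp M C x) m k d p, pst (Rp M C x) m d k' q)"])
  fix d d' G p q
  assume a: "d \<in> Ob C" "d' \<in> Ob C" "G \<in> Hom C d d'" "p \<in> pob (Lp M C x) k d" "q \<in> pob (Rp M C x) d' k'"
  have p: "p \<in> Hom C (act_o C k x) d" using a by simp
  have q: "q \<in> Hom C d' (act_o C k' x)" using a by simp
  have im: "idm M m \<in> Hom M m m" using assms Mi by blast
  have A: "aas C m k x \<in> Hom C (act_o C (tens_o M m k) x) (act_o C m (act_o C k x))" using assms aas_in by blast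
  have AI: "aas_inv C m k' x \<in> Hom C (act_o C m (act_o C k' x)) (act_o C (tens_o M m k') x)" using assms aasi_in by blast
  have P: "act_a C (idm M m) p \<in> Hom C (act_o C m (act_o C k x)) (act_o C m d)" using Aa[OF im p] .
  have Q: "act_a C (idm M m) q \<in> Hom C (act_o C m d') (act_o C m (act_o C k' x))" using Aa[OF im q] .
  have GG: "act_a C (idm M m) G \<in> Hom C (act_o C m d) (act_o C m d')" using Aa[OF im a(3)] .
  have mm: "cmp M (idm M m) (idm M m) = idm M m" using Ml[OF im] .
  have e1: "cmp C (cmp C (aas C m k x) (act_a C (idm M m) p)) (act_a C (idm M m) G)
      = cmp C (aas C m k x) (act_a C (idm M m) (cmp C p G))"
    using Ca[OF A P GG] Acomp[OF im im p a(3)] mm by simp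
  have e2: "cmp C (act_a C (idm M m) G) (cmp C (act_a C (idm M m) q) (aas_inv C m k' x))
      = cmp C (act_a C (idm M m) (cmp C G q)) (aas_inv C m k' x)"
    using Ca[OF GG Q AI] Acomp[OF im im a(3) q] mm by simp
  have s: "ce_cls C (Lp M C x) (Rp M C x) (tens_o M m k) (tens_o M m k')
     (act_o C m d', cmp C (cmp C (aas C m k x) (act_a C (idm M m) p)) (act_a C (idm M m) G), cmp C (act_a C (idm M m) q) (aas_inv C m k' x))
   = ce_cls C (Lp M C x) (Rp M C x) (tens_o M m k) (tens_o M m k')
     (act_o C m d, cmp C (aas C m k x) (act_a C (idm M m) p), cmp C (act_a C (idm M m) G) (cmp C (act_a C (idm M m) q) (aas_inv C m k' x)))"
    using step_eq[of "act_o C m d" C "act_o C m d'" "act_a C (idm M m) G" "cmp C (aas C m k x) (act_a C (idm M m) p)"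
        "Lp M C x" "tens_o M m k" "cmp C (act_a C (idm M m) q) (aas_inv C m k' x)" "Rp M C x" "tens_o M m k'"]
    using assms a GG Cc[OF A P] Cc[OF Q AI] by (simp add: Ao)
  show "ce_cls C (Lp M C x) (Rp M C x) (act_o (selfact M) m k) (act_o (selfact M) m k')
          (act_o C m d', pst (Lp M C x) m k d' (prm (Lp M C x) k d d' G p), pst (Rp M C x) m d' k' q) =
        ce_cls C (Lp M C x) (Rp M C x) (act_o (selfact M) m k) (act_o (selfact M) m k')
          (act_o C m d, pst (Lp M C x) m k d p, pst (Rp M C x) m d k' (plm (Rp M C x) d d' k' G q))"
    using s by (simp add: e1 e2)
  qed
  thus ?thesis by (simp add: pcomp_ops)
qed

lemma eta_in: assumes "x \<in> Ob C" "h \<in> Hom M k k'"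
  shows "eta M C x k k' h \<in> coend C (Lp M C x) (Rp M C x) k k'"
  unfolding eta_def using assms by (intro cls_in_coend) (auto intro: Ao Ci gx MO2)

lemma idx: "x \<in> Ob C \<Longrightarrow> cmp C (idm C x) (idm C x) = idm C x" using Cl Ci by blast

lemma eta_plm: assumes "x \<in> Ob C" "f \<in> Hom M k'' k" "h \<in> Hom M k k'"
  shows "plm (pcomp (selfact M) C (selfact M) (Lp M C x) (Rp M C x)) k'' k k' f (eta M C x k k' h) = eta M C x k'' k' (cmp M f h)"
  unfolding eta_def using assms
  by (simp add: pc_plm_cls Acomp[OF assms(2) assms(3) Ci Ci, symmetric] idx)

lemma eta_prm: assumes "x \<in> Ob C" "g \<in> Hom M k' k''" "h \<in> Hom M k k'"
  shows "prm (pcomp (selfact M) C (selfact M) (Lp M C x) (Rp M C x)) k k' k'' g (eta M C x k k' h) = eta M C x k k'' (cmp M h g)"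
proof -
  have H: "act_a C h (idm C x) \<in> Hom C (act_o C k x) (act_o C k' x)" using gx assms by blast
  have G: "act_a C g (idm C x) \<in> Hom C (act_o C k' x) (act_o C k'' x)" using gx assms by blast
  have o: "act_o C k' x \<in> Ob C" "act_o C k'' x \<in> Ob C" using CO1 CO2 G by blast+
  have "prm (pcomp (selfact M) C (selfact M) (Lp M C x) (Rp M C x)) k k' k'' g (eta M C x k k' h)
     = ce_cls C (Lp M C x) (Rp M C x) k k'' (act_o C k' x, act_a C h (idm C x), act_a C g (idm C x))"
    unfolding eta_def using assms G by (simp add: pc_prm_cls Cl)
  also have "\<dots> = ce_cls C (Lp M C x) (Rp M C x) k k'' (act_o C k'' x, cmp C (act_a C h (idm C x)) (act_a C g (idm C x)), idm C (act_o C k'' x))"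
    using step_eq[OF o G, of "act_a C h (idm C x)" "Lp M C x" k "idm C (act_o C k'' x)" "Rp M C x" k''] H o G
    by (simp add: Ci Cr)
  also have "\<dots> = eta M C x k k'' (cmp M h g)"
    unfolding eta_def using assms by (simp add: Acomp[OF assms(3) assms(2) Ci Ci, symmetric] idx)
  finally show ?thesis .
qed

lemma eta_pst: assumes "x \<in> Ob C" "m \<in> Ob M" "h \<in> Hom M k k'"
  shows "pst (pcomp (selfact M) C (selfact M) (Lp M C x) (Rp M C x)) m k k' (eta M C x k k' h)
     = eta M C x (tens_o M m k) (tens_o M m k') (tens_a M (idm M m) h)"
proof -
  have k: "k \<in> Ob M" "k' \<in> Ob M" using assms MO1 MO2 by blast+
  have im: "idm M m \<in> Hom M m m" using assms Mi by blast
  have H: "act_a C h (idm C x) \<in> Hom C (act_o C k x) (act_o C k' x)" using gx assms by blast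
  have A: "aas C m k x \<in> Hom C (act_o C (tens_o M m k) x) (act_o C m (act_o C k x))" using assms k aas_in by blast
  have A': "aas C m k' x \<in> Hom C (act_o C (tens_o M m k') x) (act_o C m (act_o C k' x))" using assms k aas_in by blast
  have G: "aas_inv C m k' x \<in> Hom C (act_o C m (act_o C k' x)) (act_o C (tens_o M m k') x)" using assms k aasi_in by blast
  have IH: "act_a C (idm M m) (act_a C h (idm C x)) \<in> Hom C (act_o C m (act_o C k x)) (act_o C m (act_o C k' x))"
    using Aa[OF im H] .
  have T: "act_a C (tens_a M (idm M m) h) (idm C x) \<in> Hom C (act_o C (tens_o M m k) x) (act_o C (tens_o M m k') x)"
    using gx[OF assms(1) Ta[OF im assms(3)]] .
  have o: "act_o C m (act_o C k' x) \<in> Ob C" "act_o C (tens_o M m k') x \<in> Ob C" using G CO1 CO2 by blast+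
  have nat: "cmp C (act_a C (tens_a M (idm M m) h) (idm C x)) (aas C m k' x) = cmp C (aas C m k x) (act_a C (idm M m) (act_a C h (idm C x)))"
    using aas_nat[OF im assms(3) Ci[OF assms(1)]] .
  have p0G: "cmp C (cmp C (aas C m k x) (act_a C (idm M m) (act_a C h (idm C x)))) (aas_inv C m k' x) = act_a C (tens_a M (idm M m) h) (idm C x)"
    using Ca[OF T A' G] T aas_ii[OF assms(2) k(2) assms(1)] Cr[OF T] by (simp add: nat[symmetric])
  have q0: "cmp C (act_a C (idm M m) (idm C (act_o C k' x))) (aas_inv C m k' x) = aas_inv C m k' x"
    using Aid[OF assms(2) Ao[OF k(2) assms(1)]] Cl[OF G] by simp
  have "pst (pcomp (selfact M) C (selfact M) (Lp M C x) (Rp M C x)) m k k' (eta M C x k k' h)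
     = ce_cls C (Lp M C x) (Rp M C x) (tens_o M m k) (tens_o M m k')
         (act_o C m (act_o C k' x), cmp C (aas C m k x) (act_a C (idm M m) (act_a C h (idm C x))), aas_inv C m k' x)"
    unfolding eta_def using assms k by (simp add: pc_pst_cls q0)
  also have "\<dots> = ce_cls C (Lp M C x) (Rp M C x) (tens_o M m k) (tens_o M m k')
         (act_o C (tens_o M m k') x, act_a C (tens_a M (idm M m) h) (idm C x), idm C (act_o C (tens_o M m k') x))"
    using step_eq[OF o G, of "cmp C (aas C m k x) (act_a C (idm M m) (act_a C h (idm C x)))" "Lp M C x" "tens_o M m k"
        "idm C (act_o C (tens_o M m k') x)" "Rp M C x" "tens_o M m k'"] o Cc[OF A IH] Ci[OF o(2)]
    by (simp add: Cr[OF G] p0G)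
  also have "\<dots> = eta M C x (tens_o M m k) (tens_o M m k') (tens_a M (idm M m) h)" unfolding eta_def ..
  finally show ?thesis .
qed

lemma eta_mor: assumes "x \<in> Ob C"
  shows "tamb_mor M (selfact M) (selfact M) (homP M (selfact M)) (pcomp (selfact M) C (selfact M) (Lp M C x) (Rp M C x)) (eta M C x)"
  unfolding tamb_mor_def using assms by (simp add: eta_in eta_plm eta_prm eta_pst)

end

context actx begin

abbreviation "LRc x \<equiv> pcomp (selfact M) C (selfact M) (Lp M C x) (Rp M C x)"
abbreviation "RLc x \<equiv> pcomp C (selfact M) C (Rp M C x) (Lp M C x)"

lemma stepB: assumes "x \<in> Ob C"
  shows "wR (selfact M) (Rp M C x) (LRc x) (eta M C x) c n (ce_cls (selfact M) (Rp M C x) (homP M (selfact M)) c n (d0,p0,q0))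
    = ce_cls (selfact M) (Rp M C x) (LRc x) c n (d0, p0, eta M C x d0 n q0)"
  unfolding wR_def
proof (rule rep_case[where G="\<lambda>d p q. ce_cls (selfact M) (Rp M C x) (LRc x) c n (d, p, eta M C x d n q)"])
  fix d d' g p q
  assume a: "d \<in> Ob (selfact M)" "d' \<in> Ob (selfact M)" "g \<in> Hom (selfact M) d d'" "p \<in> pob (Rp M C x) c d"
    "q \<in> pob (homP M (selfact M)) d' n"
  have e: "eta M C x d' n q \<in> pob (LRc x) d' n" using a eta_in assms by simp
  show "ce_cls (selfact M) (Rp M C x) (LRc x) c n (d', prm (Rp M C x) c d d' g p, eta M C x d' n q) =
        ce_cls (selfact M) (Rp M C x) (LRc x) c n (d, p, eta M C x d n (plm (homP M (selfact M)) d d' n g q))"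
    using step_eq[OF a(1,2,3,4) e] a assms by (simp add: eta_plm)
qed

lemma stepC: "lunit (Rp M C x) c n (ce_cls C (homP M C) (Rp M C x) c n (e,w,r)) = cmp C w r"
proof -
  have "(case rep (ce_cls C (homP M C) (Rp M C x) c n (e,w,r)) of (c', f, p) \<Rightarrow> plm (Rp M C x) c c' n f p) = plm (Rp M C x) c e n w r"
    by (rule rep_case[where G="\<lambda>c' f p. plm (Rp M C x) c c' n f p"]) (simp add: Ca)
  thus ?thesis unfolding lunit_def by simp
qed

lemma stepD: assumes "x \<in> Ob C"
  shows "lunit (Rp M C x) c n (wL C (homP M C) (Rp M C x) (eps C x) c n (ce_cls C (RLc x) (Rp M C x) c n (e,W,r)))
    = cmp C (eps C x c e W) r"
proof -
  have "(case rep (ce_cls C (RLc x) (Rp M C x) c n (e,W,r)) of (d,p,q) \<Rightarrow>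
       lunit (Rp M C x) c n (ce_cls C (homP M C) (Rp M C x) c n (d, eps C x c d p, q)))
     = lunit (Rp M C x) c n (ce_cls C (homP M C) (Rp M C x) c n (e, eps C x c e W, r))"
  proof (rule rep_case[where G="\<lambda>d p q. lunit (Rp M C x) c n (ce_cls C (homP M C) (Rp M C x) c n (d, eps C x c d p, q))"])
    fix d d' g p q
    assume a: "d \<in> Ob C" "d' \<in> Ob C" "g \<in> Hom C d d'" "p \<in> pob (RLc x) c d" "q \<in> pob (Rp M C x) d' n"
    have p: "eps C x c d p \<in> Hom C c d" using eps_in assms a by simp
    show "lunit (Rp M C x) c n (ce_cls C (homP M C) (Rp M C x) c n (d', eps C x c d' (prm (RLc x) c d d' g p), q)) =
          lunit (Rp M C x) c n (ce_cls C (homP M C) (Rp M C x) c n (d, eps C x c d p, plm (Rp M C x) d d' n g q))"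
      using a assms p by (simp add: stepC eps_prm Ca)
  qed
  note H = this
  obtain a1 b1 c1 where rr: "rep (ce_cls C (RLc x) (Rp M C x) c n (e,W,r)) = (a1,b1,c1)"
    by (cases "rep (ce_cls C (RLc x) (Rp M C x) c n (e,W,r))") auto
  show ?thesis using H rr by (simp add: wL_def stepC)
qed

definition "GG x c n d p \<zeta> = (case rep \<zeta> of (e,q,r) \<Rightarrow> lunit (Rp M C x) c n (wL C (homP M C) (Rp M C x) (eps C x) c n
          (ce_cls C (RLc x) (Rp M C x) c n (e, ce_cls (selfact M) (Rp M C x) (Lp M C x) c e (d,p,q), r))))"

lemma GG_eval: assumes "x \<in> Ob C" "\<zeta> \<in> coend C (Lp M C x) (Rp M C x) d n" "p \<in> Hom C c (act_o C d x)"
  shows "GG x c n d p \<zeta> = cmp C p (eps C x d n \<zeta>)"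
proof -
  obtain e q r where r: "rep \<zeta> = (e,q,r)" "e \<in> Ob C" "q \<in> Hom C (act_o C d x) e" "r \<in> Hom C e (act_o C n x)"
    using repCLR[OF assms(1) assms(1) assms(2)] by metis
  show ?thesis unfolding GG_def using r assms by (simp add: stepD eps_val eps_rep Ca)
qed

lemma plmLR_in: assumes "x \<in> Ob C" "\<zeta> \<in> coend C (Lp M C x) (Rp M C x) d' n" "g \<in> Hom M d d'"
  shows "plm (LRc x) d d' n g \<zeta> \<in> coend C (Lp M C x) (Rp M C x) d n"
    "eps C x d n (plm (LRc x) d d' n g \<zeta>) = cmp C (act_a C g (idm C x)) (eps C x d' n \<zeta>)"
proof -
  obtain e q r where r: "\<zeta> = ce_cls C (Lp M C x) (Rp M C x) d' n (e,q,r)" "rep \<zeta> = (e,q,r)" "e \<in> Ob C" "q \<in> Hom C (act_o C d' x) e" "r \<in> Hom C e (act_o C n x)"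
    using repCLR[OF assms(1) assms(1) assms(2)] by metis
  have G: "act_a C g (idm C x) \<in> Hom C (act_o C d x) (act_o C d' x)" using gx assms by blast
  have e: "plm (LRc x) d d' n g \<zeta> = ce_cls C (Lp M C x) (Rp M C x) d n (e, cmp C (act_a C g (idm C x)) q, r)"
    using r(1) pc_plm_cls assms by simp
  show "plm (LRc x) d d' n g \<zeta> \<in> coend C (Lp M C x) (Rp M C x) d n"
    unfolding e using r G by (intro cls_in_coend) (auto intro: Cc)
  show "eps C x d n (plm (LRc x) d d' n g \<zeta>) = cmp C (act_a C g (idm C x)) (eps C x d' n \<zeta>)"
    unfolding e using r G assms by (simp add: eps_val2 eps_rep Ca)
qed

lemma eps_eta: assumes "x \<in> Ob C" "n \<in> Ob M"
  shows "eps C x n n (eta M C x n n (idm M n)) = idm C (act_o C n x)"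
  unfolding eta_def using assms by (simp add: eps_val2 Aid Cl[OF Ci[OF Ao]])

lemma eps_etaC: assumes "x \<in> Ob C" "n \<in> Ob M"
  shows "eps C x n n (eta M C x n n (idm M n)) \<in> Hom C (act_o C n x) (act_o C n x)"
  using eps_eta[OF assms] Ci Ao assms by simp

lemma triangle1: assumes "x \<in> Ob C" "c \<in> Ob C" "n \<in> Ob M" "h \<in> Hom C c (act_o C n x)"
  shows "lunit (Rp M C x) c n
        (wL C (homP M C) (Rp M C x) (eps C x) c n
          (assocB C (selfact M) C (Rp M C x) (Lp M C x) (Rp M C x) c n
            (wR (selfact M) (Rp M C x) (pcomp (selfact M) C (selfact M) (Lp M C x) (Rp M C x))
                (eta M C x) c n
              (runitI M (selfact M) (Rp M C x) c n h)))) = h"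
proof -
  have in0: "runitI M (selfact M) (Rp M C x) c n h = ce_cls (selfact M) (Rp M C x) (homP M (selfact M)) c n (n, h, idm M n)"
    unfolding runitI_def by simp
  define \<Xi> where "\<Xi> = ce_cls (selfact M) (Rp M C x) (LRc x) c n (n, h, eta M C x n n (idm M n))"
  have B: "wR (selfact M) (Rp M C x) (LRc x) (eta M C x) c n (runitI M (selfact M) (Rp M C x) c n h) = \<Xi>"
    unfolding in0 \<Xi>_def using assms by (simp add: stepB)
  have F: "lunit (Rp M C x) c n (wL C (homP M C) (Rp M C x) (eps C x) c n
          (assocB C (selfact M) C (Rp M C x) (Lp M C x) (Rp M C x) c n \<Xi>)) = (case rep \<Xi> of (d,p,\<zeta>) \<Rightarrow> GG x c n d p \<zeta>)"
    unfolding assocB_def GG_def by (simp split: prod.split)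
  have "(case rep \<Xi> of (d,p,\<zeta>) \<Rightarrow> GG x c n d p \<zeta>) = GG x c n n h (eta M C x n n (idm M n))"
    unfolding \<Xi>_def
  proof (rule rep_case[where G="GG x c n"])
    fix d d' g p q
    assume a: "d \<in> Ob (selfact M)" "d' \<in> Ob (selfact M)" "g \<in> Hom (selfact M) d d'" "p \<in> pob (Rp M C x) c d"
      "q \<in> pob (LRc x) d' n"
    have G: "act_a C g (idm C x) \<in> Hom C (act_o C d x) (act_o C d' x)" using gx assms a by simp
    have p: "p \<in> Hom C c (act_o C d x)" using a by simp
    have q: "q \<in> coend C (Lp M C x) (Rp M C x) d' n" using a by simp
    have E: "eps C x d' n q \<in> Hom C (act_o C d' x) (act_o C n x)"
    proof -
      obtain e q1 r1 where r: "rep q = (e,q1,r1)" "e \<in> Ob C" "q1 \<in> Hom C (act_o C d' x) e" "r1 \<in> Hom C e (act_o C n x)"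
        using repCLR[OF assms(1) assms(1) q] by metis
      thus ?thesis by (simp add: eps_rep Cc)
    qed
    show "GG x c n d' (prm (Rp M C x) c d d' g p) q = GG x c n d p (plm (LRc x) d d' n g q)"
      using a assms plmLR_in[OF assms(1) q] G p E Cc[OF p G]
      by (simp add: GG_eval Ca)
  qed
  also have "\<dots> = h" using assms eta_in[OF assms(1) Mi[OF assms(3)]]
    by (simp add: GG_eval eps_eta Cr)
  finally show ?thesis using B F by simp
qed

end

context actx begin

lemma stepB2: assumes "x \<in> Ob C"
  shows "wL (selfact M) (LRc x) (Lp M C x) (eta M C x) n c (ce_cls (selfact M) (homP M (selfact M)) (Lp M C x) n c (d0,f0,q0))
    = ce_cls (selfact M) (LRc x) (Lp M C x) n c (d0, eta M C x n d0 f0, q0)"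
  unfolding wL_def
proof (rule rep_case[where G="\<lambda>d p q. ce_cls (selfact M) (LRc x) (Lp M C x) n c (d, eta M C x n d p, q)"])
  fix d d' g p q
  assume a: "d \<in> Ob (selfact M)" "d' \<in> Ob (selfact M)" "g \<in> Hom (selfact M) d d'" "p \<in> pob (homP M (selfact M)) n d"
    "q \<in> pob (Lp M C x) d' c"
  have e: "eta M C x n d p \<in> pob (LRc x) n d" using a eta_in assms by simp
  show "ce_cls (selfact M) (LRc x) (Lp M C x) n c (d', eta M C x n d' (prm (homP M (selfact M)) n d d' g p), q) =
        ce_cls (selfact M) (LRc x) (Lp M C x) n c (d, eta M C x n d p, plm (Lp M C x) d d' c g q)"
    using step_eq[OF a(1,2,3) e a(5)] a assms by (simp add: eta_prm)
qed

lemma stepC2: "runit (Lp M C x) n c (ce_cls C (Lp M C x) (homP M C) n c (d,p,g)) = cmp C p g"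
proof -
  have "(case rep (ce_cls C (Lp M C x) (homP M C) n c (d,p,g)) of (d', p, g) \<Rightarrow> prm (Lp M C x) n d' c g p) = prm (Lp M C x) n d c g p"
    by (rule rep_case[where G="\<lambda>d' p g. prm (Lp M C x) n d' c g p"]) (simp add: Ca)
  thus ?thesis unfolding runit_def by simp
qed

lemma stepD2: assumes "x \<in> Ob C"
  shows "runit (Lp M C x) n c (wR C (Lp M C x) (homP M C) (eps C x) n c (ce_cls C (Lp M C x) (RLc x) n c (d,p,W)))
    = cmp C p (eps C x d c W)"
proof -
  have "(case rep (ce_cls C (Lp M C x) (RLc x) n c (d,p,W)) of (d,p,q) \<Rightarrow>
       runit (Lp M C x) n c (ce_cls C (Lp M C x) (homP M C) n c (d, p, eps C x d c q)))
     = runit (Lp M C x) n c (ce_cls C (Lp M C x) (homP M C) n c (d, p, eps C x d c W))"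
  proof (rule rep_case[where G="\<lambda>d p q. runit (Lp M C x) n c (ce_cls C (Lp M C x) (homP M C) n c (d, p, eps C x d c q))"])
    fix d d' g p q
    assume a: "d \<in> Ob C" "d' \<in> Ob C" "g \<in> Hom C d d'" "p \<in> pob (Lp M C x) n d" "q \<in> pob (RLc x) d' c"
    have q: "eps C x d' c q \<in> Hom C d' c" using eps_in assms a by simp
    show "runit (Lp M C x) n c (ce_cls C (Lp M C x) (homP M C) n c (d', prm (Lp M C x) n d d' g p, eps C x d' c q)) =
          runit (Lp M C x) n c (ce_cls C (Lp M C x) (homP M C) n c (d, p, eps C x d c (plm (RLc x) d d' c g q)))"
      using a assms q by (simp add: stepC2 eps_plm Ca)
  qed
  note H = this
  obtain a1 b1 c1 where rr: "rep (ce_cls C (Lp M C x) (RLc x) n c (d,p,W)) = (a1,b1,c1)"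
    by (cases "rep (ce_cls C (Lp M C x) (RLc x) n c (d,p,W))") auto
  show ?thesis using H rr by (simp add: wR_def stepC2)
qed

definition "GG2 x n c e \<zeta> r = (case rep \<zeta> of (d,p,q) \<Rightarrow> runit (Lp M C x) n c (wR C (Lp M C x) (homP M C) (eps C x) n c
          (ce_cls C (Lp M C x) (RLc x) n c (d, p, ce_cls (selfact M) (Rp M C x) (Lp M C x) d c (e,q,r)))))"

lemma GG2_eval: assumes "x \<in> Ob C" "\<zeta> \<in> coend C (Lp M C x) (Rp M C x) n e" "r \<in> Hom C (act_o C e x) c"
  shows "GG2 x n c e \<zeta> r = cmp C (eps C x n e \<zeta>) r"
proof -
  obtain d p q where r: "rep \<zeta> = (d,p,q)" "d \<in> Ob C" "p \<in> Hom C (act_o C n x) d" "q \<in> Hom C d (act_o C e x)"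
    using repCLR[OF assms(1) assms(1) assms(2)] by metis
  show ?thesis unfolding GG2_def using r assms by (simp add: stepD2 eps_val eps_rep Ca)
qed

lemma prmLR_in: assumes "x \<in> Ob C" "\<zeta> \<in> coend C (Lp M C x) (Rp M C x) n e" "g \<in> Hom M e e'"
  shows "prm (LRc x) n e e' g \<zeta> \<in> coend C (Lp M C x) (Rp M C x) n e'"
    "eps C x n e' (prm (LRc x) n e e' g \<zeta>) = cmp C (eps C x n e \<zeta>) (act_a C g (idm C x))"
proof -
  obtain d p q where r: "\<zeta> = ce_cls C (Lp M C x) (Rp M C x) n e (d,p,q)" "rep \<zeta> = (d,p,q)" "d \<in> Ob C" "p \<in> Hom C (act_o C n x) d" "q \<in> Hom C d (act_o C e x)"
    using repCLR[OF assms(1) assms(1) assms(2)] by metis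
  have G: "act_a C g (idm C x) \<in> Hom C (act_o C e x) (act_o C e' x)" using gx assms by blast
  have E: "prm (LRc x) n e e' g \<zeta> = ce_cls C (Lp M C x) (Rp M C x) n e' (d, p, cmp C q (act_a C g (idm C x)))"
    using r(1) pc_prm_cls assms by simp
  show "prm (LRc x) n e e' g \<zeta> \<in> coend C (Lp M C x) (Rp M C x) n e'"
    unfolding E using r G by (intro cls_in_coend) (auto intro: Cc)
  show "eps C x n e' (prm (LRc x) n e e' g \<zeta>) = cmp C (eps C x n e \<zeta>) (act_a C g (idm C x))"
    unfolding E using r G assms by (simp add: eps_val2 eps_rep Ca)
qed

lemma triangle2: assumes "x \<in> Ob C" "n \<in> Ob M" "c \<in> Ob C" "h \<in> Hom C (act_o C n x) c"
  shows "runit (Lp M C x) n c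
        (wR C (Lp M C x) (homP M C) (eps C x) n c
          (assocF C (selfact M) C (Lp M C x) (Rp M C x) (Lp M C x) n c
            (wL (selfact M) (pcomp (selfact M) C (selfact M) (Lp M C x) (Rp M C x)) (Lp M C x)
                (eta M C x) n c
              (lunitI M (selfact M) (Lp M C x) n c h)))) = h"
proof -
  have in0: "lunitI M (selfact M) (Lp M C x) n c h = ce_cls (selfact M) (homP M (selfact M)) (Lp M C x) n c (n, idm M n, h)"
    unfolding lunitI_def by simp
  define \<Xi> where "\<Xi> = ce_cls (selfact M) (LRc x) (Lp M C x) n c (n, eta M C x n n (idm M n), h)"
  have B: "wL (selfact M) (LRc x) (Lp M C x) (eta M C x) n c (lunitI M (selfact M) (Lp M C x) n c h) = \<Xi>"
    unfolding in0 \<Xi>_def using assms by (simp add: stepB2)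
  have F: "runit (Lp M C x) n c (wR C (Lp M C x) (homP M C) (eps C x) n c
          (assocF C (selfact M) C (Lp M C x) (Rp M C x) (Lp M C x) n c \<Xi>)) = (case rep \<Xi> of (e,\<zeta>,r) \<Rightarrow> GG2 x n c e \<zeta> r)"
    unfolding assocF_def GG2_def by (simp split: prod.split)
  have "(case rep \<Xi> of (e,\<zeta>,r) \<Rightarrow> GG2 x n c e \<zeta> r) = GG2 x n c n (eta M C x n n (idm M n)) h"
    unfolding \<Xi>_def
  proof (rule rep_case[where G="GG2 x n c"])
    fix d d' g p q
    assume a: "d \<in> Ob (selfact M)" "d' \<in> Ob (selfact M)" "g \<in> Hom (selfact M) d d'" "p \<in> pob (LRc x) n d"
      "q \<in> pob (Lp M C x) d' c"
    have G: "act_a C g (idm C x) \<in> Hom C (act_o C d x) (act_o C d' x)" using gx assms a by simp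
    have p: "p \<in> coend C (Lp M C x) (Rp M C x) n d" using a by simp
    have q: "q \<in> Hom C (act_o C d' x) c" using a by simp
    have E: "eps C x n d p \<in> Hom C (act_o C n x) (act_o C d x)"
    proof -
      obtain e q1 r1 where r: "rep p = (e,q1,r1)" "e \<in> Ob C" "q1 \<in> Hom C (act_o C n x) e" "r1 \<in> Hom C e (act_o C d x)"
        using repCLR[OF assms(1) assms(1) p] by metis
      thus ?thesis by (simp add: eps_rep Cc)
    qed
    show "GG2 x n c d' (prm (LRc x) n d d' g p) q = GG2 x n c d p (plm (Lp M C x) d d' c g q)"
      using a assms prmLR_in[OF assms(1) p] G q E Cc[OF G q]
      by (simp add: GG2_eval Ca)
  qed
  also have "\<dots> = h" using assms eta_in[OF assms(1) Mi[OF assms(2)]]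
    by (simp add: GG2_eval eps_eta Cl)
  finally show ?thesis using B F by simp
qed

end

context actx begin

lemma dinat1: assumes "x \<in> Ob C" "y \<in> Ob C" "f \<in> Hom C x y"
   "\<xi> \<in> coend (selfact M) (Rp M C x) (Lp M C y) c c'"
  shows "eps C y c c' (wL (selfact M) (Rp M C y) (Lp M C y) (Rmor M C f) c c' \<xi>) =
         eps C x c c' (wR (selfact M) (Rp M C x) (Lp M C x) (Lmor M C f) c c' \<xi>)"
proof -
  obtain n h k where r: "rep \<xi> = (n,h,k)" "n \<in> Ob M" "h \<in> Hom C c (act_o C n x)" "k \<in> Hom C (act_o C n y) c'"
    using repSRL[OF assms(1) assms(2) assms(4)] by metis
  have F: "act_a C (idm M n) f \<in> Hom C (act_o C n x) (act_o C n y)" using Aa[OF Mi[OF r(2)] assms(3)] .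
  show ?thesis using r assms F by (simp add: wL_def wR_def Rmor_def Lmor_def eps_val Ca)
qed

lemma I6: assumes "x \<in> Ob C" "y \<in> Ob C" "f \<in> Hom C x y" "k' \<in> Ob M"
  shows "wR C (Lp M C x) (Rp M C y) (Rmor M C f) k k' (ce_cls C (Lp M C x) (Rp M C x) k k' (d0,p0,q0))
     = ce_cls C (Lp M C x) (Rp M C y) k k' (d0, p0, cmp C q0 (act_a C (idm M k') f))"
proof -
  have F: "act_a C (idm M k') f \<in> Hom C (act_o C k' x) (act_o C k' y)" using Aa[OF Mi[OF assms(4)] assms(3)] .
  have "(case rep (ce_cls C (Lp M C x) (Rp M C x) k k' (d0,p0,q0)) of (d,p,q) \<Rightarrow>
       ce_cls C (Lp M C x) (Rp M C y) k k' (d, p, cmp C q (act_a C (idm M k') f)))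
     = ce_cls C (Lp M C x) (Rp M C y) k k' (d0, p0, cmp C q0 (act_a C (idm M k') f))"
  proof (rule rep_case[where G="\<lambda>d p q. ce_cls C (Lp M C x) (Rp M C y) k k' (d, p, cmp C q (act_a C (idm M k') f))"])
    fix d d' g p q
    assume a: "d \<in> Ob C" "d' \<in> Ob C" "g \<in> Hom C d d'" "p \<in> pob (Lp M C x) k d" "q \<in> pob (Rp M C x) d' k'"
    have q: "q \<in> Hom C d' (act_o C k' x)" using a by simp
    show "ce_cls C (Lp M C x) (Rp M C y) k k' (d', prm (Lp M C x) k d d' g p, cmp C q (act_a C (idm M k') f)) =
          ce_cls C (Lp M C x) (Rp M C y) k k' (d, p, cmp C (plm (Rp M C x) d d' k' g q) (act_a C (idm M k') f))"
      using step_eq[OF a(1,2,3), of p "Lp M C x" k "cmp C q (act_a C (idm M k') f)" "Rp M C y" k'] a q F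
      by (simp add: Cc Ca)
  qed
  thus ?thesis by (simp add: wR_def Rmor_def)
qed

lemma I7: assumes "x \<in> Ob C" "y \<in> Ob C" "f \<in> Hom C x y" "k \<in> Ob M"
  shows "wL C (Lp M C x) (Rp M C y) (Lmor M C f) k k' (ce_cls C (Lp M C y) (Rp M C y) k k' (d0,p0,q0))
     = ce_cls C (Lp M C x) (Rp M C y) k k' (d0, cmp C (act_a C (idm M k) f) p0, q0)"
proof -
  have F: "act_a C (idm M k) f \<in> Hom C (act_o C k x) (act_o C k y)" using Aa[OF Mi[OF assms(4)] assms(3)] .
  have "(case rep (ce_cls C (Lp M C y) (Rp M C y) k k' (d0,p0,q0)) of (d,p,q) \<Rightarrow>
       ce_cls C (Lp M C x) (Rp M C y) k k' (d, cmp C (act_a C (idm M k) f) p, q))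
     = ce_cls C (Lp M C x) (Rp M C y) k k' (d0, cmp C (act_a C (idm M k) f) p0, q0)"
  proof (rule rep_case[where G="\<lambda>d p q. ce_cls C (Lp M C x) (Rp M C y) k k' (d, cmp C (act_a C (idm M k) f) p, q)"])
    fix d d' g p q
    assume a: "d \<in> Ob C" "d' \<in> Ob C" "g \<in> Hom C d d'" "p \<in> pob (Lp M C y) k d" "q \<in> pob (Rp M C y) d' k'"
    have p: "p \<in> Hom C (act_o C k y) d" using a by simp
    show "ce_cls C (Lp M C x) (Rp M C y) k k' (d', cmp C (act_a C (idm M k) f) (prm (Lp M C y) k d d' g p), q) =
          ce_cls C (Lp M C x) (Rp M C y) k k' (d, cmp C (act_a C (idm M k) f) p, plm (Rp M C y) d d' k' g q)"
      using step_eq[OF a(1,2,3), of "cmp C (act_a C (idm M k) f) p" "Lp M C x" k q "Rp M C y" k'] a p F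
      by (simp add: Cc Ca)
  qed
  thus ?thesis by (simp add: wL_def Lmor_def)
qed

lemma dinat2: assumes "x \<in> Ob C" "y \<in> Ob C" "f \<in> Hom C x y" "h \<in> Hom M k k'"
  shows "wR C (Lp M C x) (Rp M C y) (Rmor M C f) k k' (eta M C x k k' h) =
         wL C (Lp M C x) (Rp M C y) (Lmor M C f) k k' (eta M C y k k' h)"
proof -
  have k: "k \<in> Ob M" "k' \<in> Ob M" using assms MO1 MO2 by blast+
  have F: "act_a C (idm M k') f \<in> Hom C (act_o C k' x) (act_o C k' y)" using Aa[OF Mi[OF k(2)] assms(3)] .
  have Hx: "act_a C h (idm C x) \<in> Hom C (act_o C k x) (act_o C k' x)" using gx assms by blast
  have o: "act_o C k' x \<in> Ob C" "act_o C k' y \<in> Ob C" using F CO1 CO2 by blast+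
  have e1: "cmp C (act_a C h (idm C x)) (act_a C (idm M k') f) = act_a C h f"
    using Acomp[OF assms(4) Mi[OF k(2)] Ci[OF assms(1)] assms(3)] Mr[OF assms(4)] Cl[OF assms(3)] by simp
  have e2: "cmp C (act_a C (idm M k) f) (act_a C h (idm C y)) = act_a C h f"
    using Acomp[OF Mi[OF k(1)] assms(4) assms(3) Ci[OF assms(2)]] Ml[OF assms(4)] Cr[OF assms(3)] by simp
  have "wR C (Lp M C x) (Rp M C y) (Rmor M C f) k k' (eta M C x k k' h)
      = ce_cls C (Lp M C x) (Rp M C y) k k' (act_o C k' x, act_a C h (idm C x), act_a C (idm M k') f)"
    unfolding eta_def using assms k F by (simp add: I6 Cl)
  also have "\<dots> = ce_cls C (Lp M C x) (Rp M C y) k k' (act_o C k' y, act_a C h f, idm C (act_o C k' y))"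
    using step_eq[OF o F, of "act_a C h (idm C x)" "Lp M C x" k "idm C (act_o C k' y)" "Rp M C y" k'] Hx o F
    by (simp add: Ci Cr e1)
  also have "\<dots> = wL C (Lp M C x) (Rp M C y) (Lmor M C f) k k' (eta M C y k k' h)"
    unfolding eta_def using assms k by (simp add: I7 e2)
  finally show ?thesis .
qed

end

theorem mainTheorem2:
  fixes M :: "('m,'ma) moncat" and C :: "('m,'ma,'c,'ca) actg" and x :: 'c
  assumes "actegory M C" and "x \<in> Ob C"
  shows
   "tamb_mor M C C (pcomp C (selfact M) C (Rp M C x) (Lp M C x)) (homP M C) (eps C x) \<and>
    tamb_mor M (selfact M) (selfact M) (homP M (selfact M))
      (pcomp (selfact M) C (selfact M) (Lp M C x) (Rp M C x)) (eta M C x) \<and>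
    (\<forall>c\<in>Ob C. \<forall>n\<in>Ob M. \<forall>h\<in>Hom C c (act_o C n x).
       lunit (Rp M C x) c n
        (wL C (homP M C) (Rp M C x) (eps C x) c n
          (assocB C (selfact M) C (Rp M C x) (Lp M C x) (Rp M C x) c n
            (wR (selfact M) (Rp M C x) (pcomp (selfact M) C (selfact M) (Lp M C x) (Rp M C x))
                (eta M C x) c n
              (runitI M (selfact M) (Rp M C x) c n h)))) = h) \<and>
    (\<forall>n\<in>Ob M. \<forall>c\<in>Ob C. \<forall>h\<in>Hom C (act_o C n x) c.
       runit (Lp M C x) n c
        (wR C (Lp M C x) (homP M C) (eps C x) n c
          (assocF C (selfact M) C (Lp M C x) (Rp M C x) (Lp M C x) n c
            (wL (selfact M) (pcomp (selfact M) C (selfact M) (Lp M C x) (Rp M C x)) (Lp M C x)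
                (eta M C x) n c
              (lunitI M (selfact M) (Lp M C x) n c h)))) = h) \<and>
    (\<forall>y f. y \<in> Ob C \<and> f \<in> Hom C x y \<longrightarrow>
       (\<forall>c\<in>Ob C. \<forall>c'\<in>Ob C. \<forall>\<xi>\<in>coend (selfact M) (Rp M C x) (Lp M C y) c c'.
          eps C y c c' (wL (selfact M) (Rp M C y) (Lp M C y) (Rmor M C f) c c' \<xi>) =
          eps C x c c' (wR (selfact M) (Rp M C x) (Lp M C x) (Lmor M C f) c c' \<xi>)) \<and>
       (\<forall>k\<in>Ob M. \<forall>k'\<in>Ob M. \<forall>h\<in>Hom M k k'.
          wR C (Lp M C x) (Rp M C y) (Rmor M C f) k k' (eta M C x k k' h) =
          wL C (Lp M C x) (Rp M C y) (Lmor M C f) k k' (eta M C y k k' h)))"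
proof -
  interpret actx M C using assms(1) by unfold_locales
  have a: "x \<in> Ob C" by fact
  show ?thesis
    apply (intro conjI ballI allI impI)
    using a eps_mor apply blast
    using a eta_mor apply blast
    using a triangle1 apply blast
    using a triangle2 apply blast
    using a dinat1 apply blast
    using a dinat2 apply blast
    done
qed


end
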